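(* Let $r \geq 2$, $2 \leq h \leq r$, let $k$ be a positive integer with $k \neq 2$, and let $G$ be a finite simple $r$-regular graph. If $G$ has an $h$-factor that is completely $k$-magic, then $G$ is completely $k$-magic.
   Context: $\mathbb{Z}_1 = \mathbb{Z}$ and for $k \geq 2$, $\mathbb{Z}_k$ is the integers modulo $k$. For $c \in \mathbb{Z}_k$, a graph $G$ is $c$-sum $k$-magic if there is an edge labeling $\ell : E(G) \to \mathbb{Z}_k \setminus \{0\}$ such that for every vertex $v$, $\sum_{u \in N(v)} \ell(uv) = c$ in $\mathbb{Z}_k$. $G$ is completely $k$-magic if it is $c$-sum $k$-magic for every $c \in \mathbb{Z}_k$. An $h$-factor of $G$ is an $h$-regular spanning subgraph of $G$. *)

theory Defs
  imports Main
begin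

definition simple_graph :: "'a set \<Rightarrow> 'a set set \<Rightarrow> bool" where
  "simple_graph V E \<longleftrightarrow> finite V \<and> (\<forall>e\<in>E. e \<subseteq> V \<and> card e = 2)"

definition degree :: "'a set set \<Rightarrow> 'a \<Rightarrow> nat" where
  "degree E v = card {e\<in>E. v \<in> e}"

definition regular :: "'a set \<Rightarrow> 'a set set \<Rightarrow> nat \<Rightarrow> bool" where
  "regular V E r \<longleftrightarrow> (\<forall>v\<in>V. degree E v = r)"

definition is_factor :: "'a set \<Rightarrow> 'a set set \<Rightarrow> nat \<Rightarrow> 'a set set \<Rightarrow> bool" where
  "is_factor V E h F \<longleftrightarrow> F \<subseteq> E \<and> regular V F h"

(* Elements of Z_k are represented by integers: for k = 1, Z_1 = Z (all integers, with
   equality); for k \<ge> 2, integers modulo k (equality is congruence mod k).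
   Both cases are captured by int congruence modulo m_k, where m_1 = 0 (mod 0 is equality). *)
definition zmod :: "nat \<Rightarrow> int" where
  "zmod k = (if k = 1 then 0 else int k)"

definition Zk :: "nat \<Rightarrow> int set" where
  "Zk k = (if k = 1 then UNIV else {0..<int k})"

definition sum_magic :: "'a set \<Rightarrow> 'a set set \<Rightarrow> nat \<Rightarrow> int \<Rightarrow> bool" where
  "sum_magic V E k c \<longleftrightarrow>
     (\<exists>l :: 'a set \<Rightarrow> int.
        (\<forall>e\<in>E. l e \<in> Zk k \<and> l e \<noteq> 0) \<and>
        (\<forall>v\<in>V. (\<Sum>e\<in>{e\<in>E. v \<in> e}. l e) mod zmod k = c mod zmod k))"

definition completely_magic :: "'a set \<Rightarrow> 'a set set \<Rightarrow> nat \<Rightarrow> bool" where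
  "completely_magic V E k \<longleftrightarrow> (\<forall>c\<in>Zk k. sum_magic V E k c)"

end

theory Submission
  imports Defs
begin

theorem theorem11:
  fixes V :: "'a set" and E :: "'a set set" and r h k :: nat
  assumes "r \<ge> 2" and "2 \<le> h" and "h \<le> r"
    and "k > 0" and "k \<noteq> 2"
    and "simple_graph V E" and "regular V E r"
    and "\<exists>F. is_factor V E h F \<and> completely_magic V F k"
  shows "completely_magic V E k"
proof -
  obtain F where FE: "F \<subseteq> E" and Freg: "regular V F h" and Fm: "completely_magic V F k"
    using assms(8) unfolding is_factor_def by blast
  have finE: "finite E"
  proof -
    have "E \<subseteq> Pow V" using assms(6) unfolding simple_graph_def by blast
    moreover have "finite V" using assms(6) unfolding simple_graph_def by blast
    ultimately show ?thesis using finite_subset by blast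
  qed
  show ?thesis unfolding completely_magic_def
  proof
    fix c assume c: "c \<in> Zk k"
    define c' where "c' = (if k = 1 then c - int (r - h) else (c - int (r - h)) mod int k)"
    have c'Z: "c' \<in> Zk k" unfolding c'_def Zk_def using assms(4) by auto
    have c'm: "c' mod zmod k = (c - int (r - h)) mod zmod k"
      unfolding c'_def zmod_def by auto
    obtain l where l1: "\<forall>e\<in>F. l e \<in> Zk k \<and> l e \<noteq> 0"
      and l2: "\<forall>v\<in>V. (\<Sum>e\<in>{e\<in>F. v \<in> e}. l e) mod zmod k = c' mod zmod k"
      using Fm c'Z unfolding completely_magic_def sum_magic_def by blast
    define l' where "l' e = (if e \<in> F then l e else 1)" for e
    have oneZ: "(1::int) \<in> Zk k" unfolding Zk_def using assms(4) by auto
    show "sum_magic V E k c" unfolding sum_magic_def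
    proof (intro exI conjI ballI)
      fix e assume "e \<in> E"
      show "l' e \<in> Zk k" "l' e \<noteq> 0" using l1 oneZ unfolding l'_def by auto
    next
      fix v assume v: "v \<in> V"
      let ?A = "{e\<in>F. v \<in> e}" and ?B = "{e\<in>E - F. v \<in> e}"
      have split: "{e\<in>E. v \<in> e} = ?A \<union> ?B" using FE by auto
      have fA: "finite ?A" using finE FE finite_subset by (metis (no_types, lifting) mem_Collect_eq subsetI rev_finite_subset)
      have fB: "finite ?B" using finE by simp
      have sA: "(\<Sum>e\<in>?A. l' e) = (\<Sum>e\<in>?A. l e)" unfolding l'_def by simp
      have sB: "(\<Sum>e\<in>?B. l' e) = int (card ?B)" unfolding l'_def by simp
      have cardsplit: "card {e\<in>E. v \<in> e} = card ?A + card ?B"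
        using split fA fB card_Un_disjoint by (metis (no_types, lifting) Diff_iff disjoint_iff mem_Collect_eq)
      have "card {e\<in>E. v \<in> e} = r" using assms(7) v unfolding regular_def degree_def by auto
      moreover have "card ?A = h" using Freg v unfolding regular_def degree_def by auto
      ultimately have cB: "card ?B = r - h" using cardsplit by simp
      have "(\<Sum>e\<in>{e\<in>E. v \<in> e}. l' e) = (\<Sum>e\<in>?A. l e) + int (r - h)"
        using split fA fB sA sB cB by (subst split, subst sum.union_disjoint) auto
      hence "(\<Sum>e\<in>{e\<in>E. v \<in> e}. l' e) mod zmod k
             = ((\<Sum>e\<in>?A. l e) mod zmod k + int (r - h)) mod zmod k"
        by (simp add: mod_add_left_eq)
      also have "\<dots> = ((c - int (r - h)) mod zmod k + int (r - h)) mod zmod k"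
        using l2 v c'm by simp
      also have "\<dots> = c mod zmod k" by (simp add: mod_add_left_eq)
      finally show "(\<Sum>e\<in>{e\<in>E. v \<in> e}. l' e) mod zmod k = c mod zmod k" .
    qed
  qed
qed

end
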